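(* Let $k$ be a positive integer and $n_0,\ldots,n_{k-1}$ positive integers, with indices read modulo $k$. For each $j\in\{0,\ldots,k-1\}$ let $A^{(j)}$ be a real $n_j\times n_{j+1}$ matrix. Suppose that every edge of the signed digraph $G=G_{A^{(0)}A^{(1)}\cdots A^{(k-1)}}$ lies on a single e-cycle $C$ of length $kr$ (for some positive integer $r$), i.e. the edge set of $G$ is exactly the edge set of $C$. Then $A=A^{(0)}A^{(1)}\cdots A^{(k-1)}$ is not a $P_0$-matrix.
   Context: Indices $j$ are taken modulo $k$. The signed digraph $G=G_{A^{(0)}\cdots A^{(k-1)}}$ has vertex set the disjoint union of $V_0,\ldots,V_{k-1}$ with $V_j=\{V_j^1,\ldots,V_j^{n_j}\}$; there is a directed edge from $V_j^r$ to $V_{j+1}^s$ iff $(A^{(j)})_{rs}\neq 0$, with the sign of $(A^{(j)})_{rs}$; no other edges (loops allowed when $k=1$). A cycle means a directed cycle (no repeated vertices); every cycle has length a multiple of $k$. A cycle with $kr_1$ edges, $r_2$ of them negative, is an e-cycle if $(-1)^{r_1+r_2}=1$ and an o-cycle otherwise. A $P_0$-matrix is a real square matrix all of whose principal minors are nonnegative. *)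

theory Defs
  imports "Jordan_Normal_Form.Determinant" "Jordan_Normal_Form.DL_Submatrix"
begin

text \<open>Block matrices: A j is an n j by n ((j+1) mod k) real matrix, for j < k.
Vertices of the signed digraph are pairs (j, r) with j < k and r < n j (vertex V_j^(r+1)).\<close>

definition sd_edge :: "nat \<Rightarrow> (nat \<Rightarrow> nat) \<Rightarrow> (nat \<Rightarrow> real mat) \<Rightarrow> nat \<times> nat \<Rightarrow> nat \<times> nat \<Rightarrow> bool" where
  "sd_edge k n A u v \<longleftrightarrow>
     fst u < k \<and> snd u < n (fst u) \<and> fst v = (fst u + 1) mod k \<and> snd v < n (fst v) \<and>
     A (fst u) $$ (snd u, snd v) \<noteq> 0"

definition sd_edges :: "nat \<Rightarrow> (nat \<Rightarrow> nat) \<Rightarrow> (nat \<Rightarrow> real mat) \<Rightarrow> ((nat \<times> nat) \<times> (nat \<times> nat)) set" where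
  "sd_edges k n A = {(u, v). sd_edge k n A u v}"

definition edge_negative :: "(nat \<Rightarrow> real mat) \<Rightarrow> nat \<times> nat \<Rightarrow> nat \<times> nat \<Rightarrow> bool" where
  "edge_negative A u v \<longleftrightarrow> A (fst u) $$ (snd u, snd v) < 0"

definition sd_cycle :: "nat \<Rightarrow> (nat \<Rightarrow> nat) \<Rightarrow> (nat \<Rightarrow> real mat) \<Rightarrow> (nat \<times> nat) list \<Rightarrow> bool" where
  "sd_cycle k n A vs \<longleftrightarrow> vs \<noteq> [] \<and> distinct vs \<and>
     (\<forall>i < length vs. sd_edge k n A (vs ! i) (vs ! ((i + 1) mod length vs)))"

definition cycle_edges :: "(nat \<times> nat) list \<Rightarrow> ((nat \<times> nat) \<times> (nat \<times> nat)) set" where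
  "cycle_edges vs = {(vs ! i, vs ! ((i + 1) mod length vs)) | i. i < length vs}"

definition cycle_neg_count :: "(nat \<Rightarrow> real mat) \<Rightarrow> (nat \<times> nat) list \<Rightarrow> nat" where
  "cycle_neg_count A vs = card {i. i < length vs \<and> edge_negative A (vs ! i) (vs ! ((i + 1) mod length vs))}"

definition e_cycle :: "nat \<Rightarrow> (nat \<Rightarrow> nat) \<Rightarrow> (nat \<Rightarrow> real mat) \<Rightarrow> (nat \<times> nat) list \<Rightarrow> bool" where
  "e_cycle k n A vs \<longleftrightarrow> sd_cycle k n A vs \<and> k dvd length vs \<and>
     (-1::int) ^ (length vs div k + cycle_neg_count A vs) = 1"

definition P0_matrix :: "real mat \<Rightarrow> bool" where
  "P0_matrix M \<longleftrightarrow> square_mat M \<and>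
     (\<forall>I. I \<subseteq> {0..<dim_row M} \<longrightarrow> I \<noteq> {} \<longrightarrow> det (submatrix M I I) \<ge> 0)"

definition cyc_prod :: "nat \<Rightarrow> (nat \<Rightarrow> nat) \<Rightarrow> (nat \<Rightarrow> real mat) \<Rightarrow> real mat" where
  "cyc_prod k n A = foldr (\<lambda>j M. A j * M) [0..<k] (1\<^sub>m (n 0))"

end

theory Submission imports Defs "HOL-Combinatorics.Cycles" begin
lemma sign_cycle_of_list: "distinct cs \<Longrightarrow> sign (cycle_of_list cs) = (-1) ^ (length cs - 1)"
proof (induction cs rule: cycle_of_list.induct)
  case (1 i j cs)
  have "sign (cycle_of_list (i # j # cs)) = sign (transpose i j \<circ> cycle_of_list (j # cs))" by simp
  also have "\<dots> = sign (transpose i j) * sign (cycle_of_list (j # cs))"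
    by (rule sign_compose[OF permutation_swap_id permutation_of_cycle])
  also have "\<dots> = (-1) ^ (length (i # j # cs) - 1)" using 1 by (simp add: sign_swap_id)
  finally show ?case .
qed simp_all

lemma prod_sign:
  fixes f :: "'a \<Rightarrow> real"
  assumes "finite S" "\<forall>x\<in>S. f x \<noteq> 0"
  shows "prod f S = (-1) ^ card {x\<in>S. f x < 0} * prod (\<lambda>x. \<bar>f x\<bar>) S"
  using assms
proof (induction S rule: finite_induct)
  case empty then show ?case by simp
next
  case (insert a F)
  have fin: "finite {x\<in>F. f x < 0}" using insert by auto
  show ?case
  proof (cases "f a < 0")
    case True
    then have "{x\<in>insert a F. f x < 0} = insert a {x\<in>F. f x < 0}" by auto
    moreover have "a \<notin> {x\<in>F. f x < 0}" using insert by auto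
    ultimately have c: "card {x\<in>insert a F. f x < 0} = Suc (card {x\<in>F. f x < 0})" using fin by simp
    show ?thesis using insert True by (simp only: c prod.insert[OF insert(1,2)]) (simp add: abs_if)
  next
    case False
    then have "{x\<in>insert a F. f x < 0} = {x\<in>F. f x < 0}" by auto
    then show ?thesis using insert False by simp
  qed
qed

lemma prod_blocks:
  fixes f :: "nat \<Rightarrow> 'b::comm_monoid_mult"
  shows "(\<Prod>s<r. \<Prod>t\<in>{s*k..<s*k+k}. f t) = (\<Prod>t<r*k. f t)"
proof (induction r)
  case 0 then show ?case by simp
next
  case (Suc r)
  have "(\<Prod>t<Suc r*k. f t) = (\<Prod>t\<in>{0..<r*k}. f t) * (\<Prod>t\<in>{r*k..<r*k+k}. f t)"
    by (simp add: prod.atLeastLessThan_concat[symmetric] lessThan_atLeast0 add.commute)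
  then show ?case using Suc by (simp add: lessThan_atLeast0)
qed

lemma rot_bij:
  assumes "(m::nat) > 0"
  shows "bij_betw (\<lambda>t. (i0 + t) mod m) {..<m} {..<m}"
proof -
  have "inj_on (\<lambda>t. (i0 + t) mod m) {..<m}"
  proof -
    have *: "x = y" if "x < m" "y < m" "x \<le> y" "(i0 + x) mod m = (i0 + y) mod m" for x y
    proof -
      have "m dvd (i0 + y) - (i0 + x)" using that mod_eq_dvd_iff_nat[of "i0+x" "i0+y" m] by simp
      then have "m dvd y - x" by simp
      moreover have "y - x < m" using that by simp
      ultimately have "y - x = 0" by (cases "y - x = 0") (auto dest: dvd_imp_le)
      then show ?thesis using that by simp
    qed
    show ?thesis unfolding inj_on_def
      by (metis * lessThan_iff nat_le_linear)
  qed
  moreover have "(\<lambda>t. (i0 + t) mod m) ` {..<m} \<subseteq> {..<m}" using assms by auto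
  ultimately show ?thesis
    by (simp add: bij_betw_def card_image card_subset_eq)
qed

lemma det_cycle:
  fixes B :: "real mat"
  assumes B: "B \<in> carrier_mat r r" and r: "r > 0"
    and h: "bij_betw h {..<r} {..<r}"
    and Bh: "\<And>s s'. s<r \<Longrightarrow> s'<r \<Longrightarrow> B $$ (h s, h s') = W s * (if s' = Suc s mod r then 1 else 0)"
  shows "det B = (-1)^(r-1) * (\<Prod>s<r. W s)"
proof -
  define L where "L = map h [0..<r]"
  have inj: "inj_on h {..<r}" using h bij_betw_def by blast
  have Ldist: "distinct L" unfolding L_def using inj by (simp add: distinct_map lessThan_atLeast0)
  have Lset: "set L = {0..<r}" unfolding L_def using h by (simp add: bij_betw_def lessThan_atLeast0)
  have lenL: "length L = r" unfolding L_def by simp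
  have Lnth: "\<And>s. s < r \<Longrightarrow> L ! s = h s" unfolding L_def by simp
  define p0 where "p0 = cycle_of_list L"
  have p0perm: "p0 permutes {0..<r}" unfolding p0_def using cycle_permutes[of L] Lset by simp
  have p0h: "p0 (h s) = h (Suc s mod r)" if "s < r" for s
  proof -
    have "map p0 L = rotate1 L" using cyclic_rotation[OF Ldist, of 1] by (simp add: p0_def)
    then have "p0 (L ! s) = rotate1 L ! s" using that lenL by (metis nth_map)
    also have "\<dots> = L ! (Suc s mod r)" using that lenL by (simp add: nth_rotate1)
    finally show ?thesis using that r by (simp add: Lnth)
  qed
  have sgn: "sign p0 = (-1)^(r-1)" unfolding p0_def using sign_cycle_of_list[OF Ldist] lenL by simp
  have hsurj: "\<exists>s<r. i = h s" if "i < r" for i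
    using h that unfolding bij_betw_def by (metis imageE lessThan_iff)
  have zero: "(\<Prod>i=0..<r. B $$ (i, p i)) = 0" if p: "p permutes {0..<r}" "p \<noteq> p0" for p
  proof -
    obtain i where i: "p i \<noteq> p0 i" using p by blast
    have ir: "i < r"
    proof (rule ccontr)
      assume "\<not> i < r"
      then have "p i = i" "p0 i = i" using p p0perm by (auto simp: permutes_def)
      then show False using i by simp
    qed
    obtain s where s: "s < r" "i = h s" using hsurj ir by blast
    have "p i < r" using p ir by (meson atLeastLessThan_iff permutes_in_image zero_le)
    then obtain s' where s': "s' < r" "p i = h s'" using hsurj by blast
    have "s' \<noteq> Suc s mod r" using i s s' p0h by auto
    then have "B $$ (i, p i) = 0" using Bh s s' by simp
    then show ?thesis using ir by (meson atLeastLessThan_iff finite_atLeastLessThan prod_zero zero_le)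
  qed
  have "det B = (\<Sum>p\<in>{p. p permutes {0..<r}}. signof p * (\<Prod>i=0..<r. B $$ (i, p i)))"
    by (rule det_def'[OF B])
  also have "\<dots> = signof p0 * (\<Prod>i=0..<r. B $$ (i, p0 i))"
  proof -
    have fin: "finite {p. p permutes {0..<r}}" by (simp add: finite_permutations)
    have "(\<Sum>p\<in>{p. p permutes {0..<r}}. signof p * (\<Prod>i=0..<r. B $$ (i, p i)))
      = signof p0 * (\<Prod>i=0..<r. B $$ (i, p0 i)) + (\<Sum>p\<in>{p. p permutes {0..<r}} - {p0}. signof p * (\<Prod>i=0..<r. B $$ (i, p i)))"
      using sum.remove[OF fin, of p0] p0perm by simp
    also have "(\<Sum>p\<in>{p. p permutes {0..<r}} - {p0}. signof p * (\<Prod>i=0..<r. B $$ (i, p i))) = (0::real)"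
      by (rule sum.neutral) (use zero in auto)
    finally show ?thesis by simp
  qed
  also have "(\<Prod>i=0..<r. B $$ (i, p0 i)) = (\<Prod>s<r. B $$ (h s, p0 (h s)))"
    using prod.reindex_bij_betw[OF h, of "\<lambda>i. B $$ (i, p0 i)"] by (simp add: lessThan_atLeast0)
  also have "\<dots> = (\<Prod>s<r. W s)"
  proof (rule prod.cong)
    fix s assume "s \<in> {..<r}"
    then show "B $$ (h s, p0 (h s)) = W s" using p0h Bh r by simp
  qed simp
  finally show ?thesis using sgn by simp
qed

lemma sum_single_nz:
  fixes g :: "'a \<Rightarrow> 'b::comm_monoid_add"
  assumes "finite S" "b0 \<in> S" "\<And>b. b \<in> S \<Longrightarrow> b \<noteq> b0 \<Longrightarrow> g b = 0"
  shows "sum g S = g b0"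
proof -
  have "sum g S = g b0 + sum g (S - {b0})" using sum.remove[OF assms(1,2)] by simp
  also have "sum g (S - {b0}) = 0" by (rule sum.neutral) (use assms(3) in auto)
  finally show ?thesis by simp
qed

lemma bij_from_inj:
  assumes "inj_on h {..<(r::nat)}" "\<And>s. s < r \<Longrightarrow> h s < r"
  shows "bij_betw h {..<r} {..<r}"
proof -
  have "h ` {..<r} \<subseteq> {..<r}" using assms(2) by auto
  then show ?thesis using assms(1) by (simp add: bij_betw_def card_image card_subset_eq)
qed

theorem lemma5:
  fixes k :: nat and n :: "nat \<Rightarrow> nat" and A :: "nat \<Rightarrow> real mat"
  assumes "k > 0"
    and "\<forall>j < k. n j > 0"
    and "\<forall>j < k. A j \<in> carrier_mat (n j) (n ((j + 1) mod k))"
    and "\<exists>C. e_cycle k n A C \<and> sd_edges k n A = cycle_edges C"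
  shows "\<not> P0_matrix (cyc_prod k n A)"
proof
  assume P0: "P0_matrix (cyc_prod k n A)"
  have kpos: "k > 0" using assms(1) .
  have Acar: "\<And>j. j < k \<Longrightarrow> A j \<in> carrier_mat (n j) (n (Suc j mod k))" using assms(3) by simp
  obtain C where eC: "e_cycle k n A C" and EC: "sd_edges k n A = cycle_edges C" using assms(4) by blast
  define m where "m = length C"
  have cyc: "sd_cycle k n A C" and kdvd: "k dvd m"
    and par: "(-1::int)^(m div k + cycle_neg_count A C) = 1"
    using eC unfolding e_cycle_def m_def by auto
  have Cne: "C \<noteq> []" and Cdist: "distinct C"
    and Cedge: "\<And>i. i < m \<Longrightarrow> sd_edge k n A (C!i) (C!((i+1) mod m))"
    using cyc unfolding sd_cycle_def m_def by auto
  have m0: "m > 0" using Cne m_def by simp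
  have layer: "fst (C ! ((i0 + t) mod m)) = (fst (C ! i0) + t) mod k" if "i0 < m" for i0 t
  proof (induction t)
    case 0
    have "fst (C ! i0) < k" using Cedge[OF that] unfolding sd_edge_def by simp
    then show ?case using that by simp
  next
    case (Suc t)
    define q where "q = (i0 + t) mod m"
    have qm: "q < m" using m0 by (simp add: q_def)
    have "fst (C ! ((q+1) mod m)) = (fst (C ! q) + 1) mod k" using Cedge[OF qm] unfolding sd_edge_def by simp
    moreover have "(q + 1) mod m = (i0 + Suc t) mod m" by (simp add: q_def mod_Suc_eq)
    ultimately show ?case using Suc by (simp add: q_def mod_Suc_eq)
  qed
  define f0 where "f0 = fst (C!0)"
  have f0k: "f0 < k" using Cedge[of 0] m0 unfolding sd_edge_def f0_def by simp
  define i0 where "i0 = (k - f0) mod m"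
  have i0m: "i0 < m" using m0 by (simp add: i0_def)
  have fi0: "fst (C!i0) = 0" using layer[of 0 "k - f0"] m0 f0k by (simp add: i0_def f0_def)
  define p where "p t = (i0 + t) mod m" for t
  define D where "D t = C ! p t" for t
  have pm: "p t < m" for t using m0 by (simp add: p_def)
  have pbij: "bij_betw p {..<m} {..<m}" unfolding p_def by (rule rot_bij[OF m0])
  have Dlayer: "fst (D t) = t mod k" for t using layer[OF i0m, of t] fi0 by (simp add: D_def p_def)
  have psuc: "p (Suc t) = Suc (p t) mod m" for t by (simp add: p_def mod_Suc_eq)
  have Dedge: "sd_edge k n A (D t) (D (Suc t))" for t using Cedge[OF pm[of t]] psuc[of t] by (simp add: D_def)
  have Dvalid: "snd (D t) < n (t mod k)" for t using Dedge[of t] Dlayer[of t] unfolding sd_edge_def by simp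
  have Dper: "D (t + m) = D t" for t by (simp add: D_def p_def add.assoc[symmetric])
  have Dinj: "t = t'" if "D t = D t'" "t < m" "t' < m" for t t'
  proof -
    have "p t = p t'" using that Cdist pm unfolding D_def m_def by (simp add: nth_eq_iff_index_eq)
    then show ?thesis using pbij that unfolding bij_betw_def inj_on_def by simp
  qed
  have Dpair: "D t = (t mod k, snd (D t))" for t using Dlayer[of t] by (metis prod.collapse)
  have uniq: "A (t mod k) $$ (snd (D t), b) = 0" if "b < n (Suc (t mod k) mod k)" "b \<noteq> snd (D (Suc t))" for t b
  proof (rule ccontr)
    assume nz: "A (t mod k) $$ (snd (D t), b) \<noteq> 0"
    have "sd_edge k n A (D t) (Suc (t mod k) mod k, b)"
      unfolding sd_edge_def using nz that Dvalid[of t] Dlayer[of t] kpos by simp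
    then have "(D t, (Suc (t mod k) mod k, b)) \<in> cycle_edges C" using EC unfolding sd_edges_def by auto
    then obtain i where i: "i < m" "C!i = D t" "C!((i+1) mod m) = (Suc (t mod k) mod k, b)"
      unfolding cycle_edges_def m_def by auto
    have "i = p t" using i pm[of t] Cdist unfolding D_def m_def by (simp add: nth_eq_iff_index_eq)
    then have "C!((i+1) mod m) = D (Suc t)" using psuc[of t] by (simp add: D_def)
    then have "b = snd (D (Suc t))" using i by (metis snd_conv)
    with that show False by simp
  qed
  define w where "w t = A (t mod k) $$ (snd (D t), snd (D (Suc t)))" for t
  define Q where "Q j = foldr (\<lambda>j M. A j * M) [j..<k] (1\<^sub>m (n 0))" for j
  have Qstep: "Q j = A j * Q (Suc j)" if "j < k" for j using that by (simp add: Q_def upt_rec)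
  have Qk: "Q k = 1\<^sub>m (n 0)" by (simp add: Q_def)
  have Qcar: "d \<le> k \<Longrightarrow> Q (k - d) \<in> carrier_mat (n ((k-d) mod k)) (n 0)" for d
  proof (induction d)
    case 0 then show ?case by (simp add: Qk)
  next
    case (Suc d)
    define j where "j = k - Suc d"
    have jk: "j < k" "Suc j = k - d" using Suc.prems by (auto simp: j_def)
    have "Q j = A j * Q (Suc j)" using Qstep[OF jk(1)] .
    moreover have "A j \<in> carrier_mat (n j) (n (Suc j mod k))" using Acar[OF jk(1)] .
    moreover have "Q (Suc j) \<in> carrier_mat (n (Suc j mod k)) (n 0)" using Suc jk by simp
    ultimately have "Q j \<in> carrier_mat (n j) (n 0)" by simp
    then show ?case using jk by (simp add: j_def)
  qed
  have Qrow: "d \<le> k \<Longrightarrow> t mod k = (k-d) mod k \<Longrightarrow> c < n 0 \<Longrightarrow>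
      Q (k-d) $$ (snd (D t), c) = (\<Prod>s\<in>{t..<t+d}. w s) * (if c = snd (D (t+d)) then 1 else 0)" for d t c
  proof (induction d arbitrary: t)
    case 0
    have "snd (D t) < n 0" using Dvalid[of t] 0 by simp
    then show ?case using 0 by (auto simp: Qk)
  next
    case (Suc d)
    define j where "j = k - Suc d"
    have jk: "j < k" "Suc j = k - d" using Suc.prems by (auto simp: j_def)
    have tj: "t mod k = j" using Suc.prems jk by (simp add: j_def)
    define Q' where "Q' = Q (Suc j)"
    have Q'car: "Q' \<in> carrier_mat (n (Suc j mod k)) (n 0)" using Qcar[of d] Suc.prems jk by (simp add: Q'_def)
    have Ajc: "A j \<in> carrier_mat (n j) (n (Suc j mod k))" using Acar[OF jk(1)] .
    define a where "a = snd (D t)"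
    define b0 where "b0 = snd (D (Suc t))"
    have an: "a < n j" using Dvalid[of t] tj by (simp add: a_def)
    have sj: "Suc t mod k = Suc j mod k" by (metis tj mod_Suc_eq)
    have b0n: "b0 < n (Suc j mod k)" using Dvalid[of "Suc t"] sj by (simp add: b0_def)
    have "Q j $$ (a, c) = (A j * Q') $$ (a, c)" using Qstep[OF jk(1)] by (simp add: Q'_def)
    also have "\<dots> = (\<Sum>b\<in>{0..<n (Suc j mod k)}. A j $$ (a, b) * Q' $$ (b, c))"
      using an Suc.prems Ajc Q'car by (simp add: scalar_prod_def)
    also have "\<dots> = A j $$ (a, b0) * Q' $$ (b0, c)"
    proof (rule sum_single_nz)
      fix b assume "b \<in> {0..<n (Suc j mod k)}" "b \<noteq> b0"
      then have "A j $$ (a, b) = 0" using uniq[of b t] tj by (simp add: a_def b0_def)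
      then show "A j $$ (a, b) * Q' $$ (b, c) = 0" by simp
    qed (use b0n in auto)
    also have "A j $$ (a, b0) = w t" using tj by (simp add: w_def a_def b0_def)
    also have "Q' $$ (b0, c) = (\<Prod>s\<in>{Suc t..<Suc t+d}. w s) * (if c = snd (D (Suc t+d)) then 1 else 0)"
      using Suc.IH[of "Suc t"] Suc.prems sj jk unfolding Q'_def b0_def by simp
    also have "w t * ((\<Prod>s\<in>{Suc t..<Suc t+d}. w s) * (if c = snd (D (Suc t+d)) then 1 else 0))
       = (\<Prod>s\<in>{t..<t+Suc d}. w s) * (if c = snd (D (t+Suc d)) then 1 else 0)"
      by (simp add: prod.atLeast_Suc_lessThan)
    finally show ?case using jk by (simp add: j_def a_def)
  qed
  define M where "M = cyc_prod k n A"
  have MQ: "M = Q 0" by (simp add: M_def cyc_prod_def Q_def)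
  have Mcar: "M \<in> carrier_mat (n 0) (n 0)" using Qcar[of k] by (simp add: MQ)
  define W where "W s = (\<Prod>t\<in>{s*k..<s*k+k}. w t)" for s
  define e where "e s = snd (D (s*k))" for s
  have Mrow: "M $$ (e s, c) = W s * (if c = e (Suc s) then 1 else 0)" if "c < n 0" for s c
    using Qrow[of k "s*k" c] that unfolding MQ e_def W_def by (simp add: add.commute)
  define r where "r = m div k"
  have mr: "m = r * k" using kdvd by (simp add: r_def)
  have r0: "r > 0" using m0 mr by (cases r) auto
  have en: "e s < n 0" for s using Dvalid[of "s*k"] by (simp add: e_def)
  have einj: "s = s'" if "e s = e s'" "s < r" "s' < r" for s s'
  proof -
    have "D (s*k) = D (s'*k)" using that Dpair[of "s*k"] Dpair[of "s'*k"] by (simp add: e_def)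
    moreover have "s*k < m" "s'*k < m" using that kpos mr by auto
    ultimately have "s*k = s'*k" using Dinj by blast
    then show ?thesis using kpos by simp
  qed
  have ewrap: "e (Suc s) = e (Suc s mod r)" if "s < r" for s
  proof (cases "Suc s < r")
    case True then show ?thesis by simp
  next
    case False
    then have "Suc s = r" using that by simp
    then have "Suc s * k = 0 + m" using mr by simp
    then show ?thesis using Dper[of 0] `Suc s = r` by (simp add: e_def)
  qed
  define I where "I = e ` {..<r}"
  have Isub: "I \<subseteq> {0..<dim_row M}" using en Mcar by (auto simp: I_def)
  have Ine: "I \<noteq> {}" using r0 by (auto simp: I_def)
  have Ifin: "finite I" by (simp add: I_def)
  have einj': "inj_on e {..<r}"
  proof (rule inj_onI)
    fix s s' assume "s \<in> {..<r}" "s' \<in> {..<r}" "e s = e s'"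
    then show "s = s'" using einj by simp
  qed
  have Icard: "card I = r" unfolding I_def using card_image[OF einj'] by simp
  have Iset: "{i. i < dim_row M \<and> i \<in> I} = I" using Isub by (simp add: subset_iff set_eq_iff) blast
  define B where "B = submatrix M I I"
  have dM: "dim_row M = n 0" "dim_col M = n 0" using Mcar by auto
  have Iset': "{j. j < dim_col M \<and> j \<in> I} = I" using Iset dM by simp
  have Bcar: "B \<in> carrier_mat r r" unfolding B_def carrier_mat_def by (simp only: dim_submatrix Iset Iset' Icard mem_Collect_eq)
  define h where "h s = card {a\<in>I. a < e s}" for s
  have pickh: "pick I (h s) = e s" if "s < r" for s
  proof -
    have "e s \<in> I" using that by (simp add: I_def)
    then show ?thesis unfolding h_def by (rule pick_card_in_set)
  qed
  have hr: "h s < r" if "s < r" for s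
  proof -
    have "e s \<in> I" using that by (simp add: I_def)
    then have "{a\<in>I. a < e s} \<subset> I" by blast
    then show ?thesis unfolding h_def using Icard psubset_card_mono[OF Ifin] by simp
  qed
  have hinj: "inj_on h {..<r}"
  proof (rule inj_onI)
    fix s s' assume "s \<in> {..<r}" "s' \<in> {..<r}" "h s = h s'"
    then have "e s = e s'" using pickh[of s] pickh[of s'] by simp
    then show "s = s'" using einj \<open>s \<in> {..<r}\<close> \<open>s' \<in> {..<r}\<close> by simp
  qed
  have hbij: "bij_betw h {..<r} {..<r}" using bij_from_inj[OF hinj hr] by simp
  have Bh: "B $$ (h s, h s') = W s * (if s' = Suc s mod r then 1 else 0)" if "s < r" "s' < r" for s s'
  proof -
    have "B $$ (h s, h s') = M $$ (pick I (h s), pick I (h s'))"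
      unfolding B_def using hr[OF that(1)] hr[OF that(2)] by (intro submatrix_index) (simp_all only: Iset Iset' Icard)
    also have "\<dots> = M $$ (e s, e s')" using pickh that by simp
    also have "\<dots> = W s * (if e s' = e (Suc s mod r) then 1 else 0)" using Mrow[OF en] ewrap[OF that(1)] by simp
    also have "(e s' = e (Suc s mod r)) = (s' = Suc s mod r)"
    proof
      assume "e s' = e (Suc s mod r)"
      then show "s' = Suc s mod r" using einj[of s' "Suc s mod r"] that r0 by simp
    qed simp
    finally show ?thesis .
  qed
  have detB: "det B = (-1)^(r-1) * (\<Prod>s<r. W s)" by (rule det_cycle[OF Bcar r0 hbij Bh])
  have "(\<Prod>s<r. W s) = (\<Prod>t<m. w t)" unfolding W_def mr by (rule prod_blocks)
  define wC where "wC i = A (fst (C!i)) $$ (snd (C!i), snd (C!((i+1) mod m)))" for i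
  have wwC: "w t = wC (p t)" for t
    using Dlayer[of t] psuc[of t] by (simp add: w_def wC_def D_def)
  have "(\<Prod>t<m. w t) = (\<Prod>i<m. wC i)"
    unfolding wwC by (rule prod.reindex_bij_betw[OF pbij])
  have wCnz: "\<forall>i\<in>{..<m}. wC i \<noteq> 0" using Cedge unfolding wC_def sd_edge_def by auto
  have negc: "{i\<in>{..<m}. wC i < 0} = {i. i < length C \<and> edge_negative A (C ! i) (C ! ((i + 1) mod length C))}"
    by (auto simp: wC_def edge_negative_def m_def)
  define N where "N = cycle_neg_count A C"
  have "(\<Prod>i<m. wC i) = (-1)^N * (\<Prod>i<m. \<bar>wC i\<bar>)"
    using prod_sign[OF _ wCnz] negc by (simp add: N_def cycle_neg_count_def)
  have pos: "(\<Prod>i<m. \<bar>wC i\<bar>) > 0" using wCnz by (intro prod_pos) auto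
  have evenrN: "even (r + N)"
  proof (rule ccontr)
    assume "odd (r + N)"
    then have "(-1::int)^(r + N) = -1" by simp
    then show False using par by (simp add: N_def r_def)
  qed
  have "det B = (-1)^(r-1+N) * (\<Prod>i<m. \<bar>wC i\<bar>)"
    using detB `(\<Prod>s<r. W s) = (\<Prod>t<m. w t)` `(\<Prod>t<m. w t) = (\<Prod>i<m. wC i)`
      `(\<Prod>i<m. wC i) = (-1)^N * (\<Prod>i<m. \<bar>wC i\<bar>)` by (simp add: power_add)
  moreover have "odd (r - 1 + N)" using evenrN r0 by (cases r) auto
  ultimately have "det B < 0" using pos by simp
  moreover have "det B \<ge> 0" using P0 Isub Ine unfolding P0_matrix_def B_def M_def by auto
  ultimately show False by simp
qed
end
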